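(* Let $r\ge3$ be odd and $q=\exp(i\pi/r)$ (so all $\epsilon_n=1$). Then the embeddings of $V_q$ into $\mathbb{C}$ are exactly $e_1\mapsto 2i\cos(k\pi/r)$ for $k=1,\dots,r-1$, the subalgebra $V_q^+$ is totally real, and for every $g\ge 0$ $$\epsilon(\Omega^g)=\operatorname{tr}_{V_q}(\Omega^{g-1})=\Big(\frac r2\Big)^{g-1}\sum_{k=1}^{r-1}\sin\Big(\frac{k\pi}{r}\Big)^{2-2g}.$$ More precisely, at the embedding associated to $t=\exp(ik\pi/r)$ (with $e_1\mapsto i(t+t^{-1})$) one has $\Omega\mapsto\frac{-2r}{(t-t^{-1})^2}$.
   Context: For $q=\exp(i\pi/r)$ the signed Verlinde algebra $V_q$ is the commutative $\mathbb{Q}$-algebra with basis $e_0=1,e_1,\dots,e_{r-2}$ and multiplication determined by $e_1e_n=e_{n+1}-e_{n-1}$ ($e_{-1}=e_{r-1}=0$); equivalently $V_q\cong\mathbb{Q}[X]/(U_{r-1})$ via $X\mapsto e_1$, where $U_0=1$, $U_1=X$, $U_{n+1}=XU_n+U_{n-1}$, so that $U_n(i(t+t^{-1}))=i^n\frac{t^{n+1}-t^{-n-1}}{t-t^{-1}}$. It is a Frobenius algebra with $\eta$ diagonal in the basis $(e_n)$, $\eta(e_n,e_n)=(-1)^n$, counit $\epsilon(f)=\eta(f,e_0)$, and $\Omega=\sum_{n=0}^{r-2}(-1)^ne_n^2$. $V_q^+$ is the subalgebra spanned by $e_0,e_2,\dots,e_{r-3}$. $\operatorname{tr}_{V_q}(a)$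 denotes the trace of multiplication by $a$. *)

theory Defs
  imports Complex_Main "HOL-Computational_Algebra.Polynomial"
begin

fun Ucheb :: "nat \<Rightarrow> 'a::comm_ring_1 poly" where
  "Ucheb 0 = 1"
| "Ucheb (Suc 0) = [:0, 1:]"
| "Ucheb (Suc (Suc n)) = [:0, 1:] * Ucheb (Suc n) + Ucheb n"

text \<open>The signed Verlinde algebra V_q (q = exp(i pi/r)) realised as Q[X]/(U_(r-1)):
  its carrier is the set of rational polynomials of degree < r - 1 (reduced representatives).\<close>
definition Vcarrier :: "nat \<Rightarrow> rat poly set" where
  "Vcarrier r = {p. p = 0 \<or> degree p < r - 1}"

definition Vmult :: "nat \<Rightarrow> rat poly \<Rightarrow> rat poly \<Rightarrow> rat poly" where
  "Vmult r a b = (a * b) mod Ucheb (r - 1)"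

definition Vone :: "nat \<Rightarrow> rat poly" where
  "Vone r = 1 mod Ucheb (r - 1)"

text \<open>Basis element e_n (corresponds to U_n under X \<mapsto> e_1).\<close>
definition Ve :: "nat \<Rightarrow> nat \<Rightarrow> rat poly" where
  "Ve r n = Ucheb n mod Ucheb (r - 1)"

definition Vcoord :: "nat \<Rightarrow> rat poly \<Rightarrow> nat \<Rightarrow> rat" where
  "Vcoord r f = (THE c. (\<forall>n\<ge>r - 1. c n = 0) \<and> f = (\<Sum>n<r - 1. smult (c n) (Ve r n)))"

definition Veta :: "nat \<Rightarrow> rat poly \<Rightarrow> rat poly \<Rightarrow> rat" where
  "Veta r f g = (\<Sum>n<r - 1. (-1) ^ n * Vcoord r f n * Vcoord r g n)"

definition Vcounit :: "nat \<Rightarrow> rat poly \<Rightarrow> rat" where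
  "Vcounit r f = Veta r f (Ve r 0)"

definition VOmega :: "nat \<Rightarrow> rat poly" where
  "VOmega r = (\<Sum>n<r - 1. smult ((-1) ^ n) (Vmult r (Ve r n) (Ve r n)))"

definition Vtrace :: "nat \<Rightarrow> rat poly \<Rightarrow> rat" where
  "Vtrace r a = (\<Sum>n<r - 1. Vcoord r (Vmult r a (Ve r n)) n)"

fun Vpow :: "nat \<Rightarrow> rat poly \<Rightarrow> nat \<Rightarrow> rat poly" where
  "Vpow r a 0 = Vone r"
| "Vpow r a (Suc n) = Vmult r a (Vpow r a n)"

definition Vinv :: "nat \<Rightarrow> rat poly \<Rightarrow> rat poly" where
  "Vinv r a = (THE b. b \<in> Vcarrier r \<and> Vmult r a b = Vone r)"

definition Vzpow :: "nat \<Rightarrow> rat poly \<Rightarrow> int \<Rightarrow> rat poly" where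
  "Vzpow r a k = (if k \<ge> 0 then Vpow r a (nat k) else Vpow r (Vinv r a) (nat (- k)))"

definition Vplus :: "nat \<Rightarrow> rat poly set" where
  "Vplus r = {f \<in> Vcarrier r. \<forall>n. odd n \<longrightarrow> Vcoord r f n = 0}"

definition is_embedding_on :: "nat \<Rightarrow> rat poly set \<Rightarrow> (rat poly \<Rightarrow> complex) \<Rightarrow> bool" where
  "is_embedding_on r S \<phi> \<longleftrightarrow>
     \<phi> (Vone r) = 1 \<and>
     (\<forall>a\<in>S. \<forall>b\<in>S. \<phi> (a + b) = \<phi> a + \<phi> b) \<and>
     (\<forall>a\<in>S. \<forall>b\<in>S. \<phi> (Vmult r a b) = \<phi> a * \<phi> b) \<and>
     (\<forall>c. \<forall>a\<in>S. \<phi> (smult c a) = of_rat c * \<phi> a)"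

definition Veval :: "complex \<Rightarrow> rat poly \<Rightarrow> complex" where
  "Veval z f = poly (map_poly of_rat f) z"

end

theory Submission
  imports Defs "HOL-Analysis.Analysis" "HOL-Computational_Algebra.Fundamental_Theorem_Algebra"
    "HOL-Computational_Algebra.Field_as_Ring" "HOL-Computational_Algebra.Polynomial_Factorial"
begin


lemma map_rat_add: "map_poly (of_rat::rat\<Rightarrow>'a::field_char_0) (p+q) = map_poly of_rat p + map_poly of_rat q"
  by (rule poly_eqI) (simp add: coeff_map_poly of_rat_add)
lemma map_rat_diff: "map_poly (of_rat::rat\<Rightarrow>'a::field_char_0) (p-q) = map_poly of_rat p - map_poly of_rat q"
  by (rule poly_eqI) (simp add: coeff_map_poly of_rat_diff)
lemma map_rat_mult: "map_poly (of_rat::rat\<Rightarrow>'a::field_char_0) (p*q) = map_poly of_rat p * map_poly of_rat q"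
  by (rule poly_eqI) (simp add: coeff_map_poly coeff_mult of_rat_sum of_rat_mult)
lemma map_rat_smult: "map_poly (of_rat::rat\<Rightarrow>'a::field_char_0) (smult c p) = smult (of_rat c) (map_poly of_rat p)"
  by (rule poly_eqI) (simp add: coeff_map_poly of_rat_mult)

lemma map_rat_Ucheb: "map_poly (of_rat::rat\<Rightarrow>'a::field_char_0) (Ucheb n) = Ucheb n"
  by (induction n rule: Ucheb.induct) (simp_all add: map_rat_add map_rat_mult map_poly_pCons)

lemma Veval_add: "Veval z (p+q) = Veval z p + Veval z q" by (simp add: Veval_def map_rat_add)
lemma Veval_diff: "Veval z (p-q) = Veval z p - Veval z q" by (simp add: Veval_def map_rat_diff)
lemma Veval_mult: "Veval z (p*q) = Veval z p * Veval z q" by (simp add: Veval_def map_rat_mult)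
lemma Veval_smult: "Veval z (smult c p) = of_rat c * Veval z p" by (simp add: Veval_def map_rat_smult)
lemma Veval_1: "Veval z 1 = 1" by (simp add: Veval_def)
lemma Veval_0: "Veval z 0 = 0" by (simp add: Veval_def)
lemma Veval_sum: "Veval z (\<Sum>i\<in>A. f i) = (\<Sum>i\<in>A. Veval z (f i))"
  by (induction A rule: infinite_finite_induct) (simp_all add: Veval_0 Veval_add)
lemma Veval_Ucheb: "Veval z (Ucheb n) = poly (Ucheb n) z" by (simp add: Veval_def map_rat_Ucheb)
lemma Veval_X: "Veval z [:0,1:] = z" by (simp add: Veval_def map_poly_pCons)
lemma Veval_power: "Veval z (p^n) = Veval z p ^ n" by (induction n) (simp_all add: Veval_1 Veval_mult)

lemma Veval_mod: assumes "poly (Ucheb m) z = 0" shows "Veval z (p mod Ucheb m) = Veval z p"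
proof -
  have "Veval z p = Veval z ((p div Ucheb m) * Ucheb m + p mod Ucheb m)" by simp
  also have "\<dots> = Veval z (p mod Ucheb m)" unfolding Veval_add Veval_mult Veval_Ucheb using assms by simp
  finally show ?thesis by simp
qed

lemma Ucheb_deg: "degree (Ucheb n :: 'a::{comm_ring_1,ring_no_zero_divisors} poly) = n \<and> coeff (Ucheb n :: 'a poly) n = 1"
proof (induction n rule: Ucheb.induct)
  case (3 n)
  have e: "[:0,1:] * (Ucheb (Suc n) :: 'a poly) = pCons 0 (Ucheb (Suc n))" by simp
  have d1: "degree (pCons 0 (Ucheb (Suc n) :: 'a poly)) = Suc (Suc n)" using 3 by (auto simp: degree_pCons_eq_if)
  show ?case using 3 d1 by (simp add: e degree_add_eq_left coeff_eq_0)
qed auto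

lemma Ucheb_parity: "odd (n + j) \<Longrightarrow> coeff (Ucheb n :: 'a::comm_ring_1 poly) j = 0"
proof (induction n arbitrary: j rule: Ucheb.induct)
  case (3 n)
  have e: "[:0,1:] * (Ucheb (Suc n) :: 'a poly) = pCons 0 (Ucheb (Suc n))" by simp
  show ?case using 3 by (cases j) (auto simp: e coeff_pCons)
qed (auto simp: coeff_pCons odd_pos split: nat.splits)


lemma Ucheb_ne0: "(Ucheb n :: 'a::{comm_ring_1,ring_no_zero_divisors} poly) \<noteq> 0"
  using Ucheb_deg[of n, where 'a='a] by auto

lemma Ucheb_coeff_high: "n < j \<Longrightarrow> coeff (Ucheb n :: 'a::{comm_ring_1,ring_no_zero_divisors} poly) j = 0"
  using Ucheb_deg[of n, where 'a='a] by (simp add: coeff_eq_0)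

lemma carrier_iff: "r \<ge> 2 \<Longrightarrow> p \<in> Vcarrier r \<longleftrightarrow> (\<forall>j\<ge>r-1. coeff p j = 0)"
proof
  assume "r \<ge> 2" "p \<in> Vcarrier r" then show "\<forall>j\<ge>r-1. coeff p j = 0"
    by (auto simp: Vcarrier_def coeff_eq_0)
next
  assume r: "r \<ge> 2" and h: "\<forall>j\<ge>r-1. coeff p j = 0"
  show "p \<in> Vcarrier r"
  proof (cases "p = 0")
    case False
    then have "coeff p (degree p) \<noteq> 0" by simp
    then have "degree p < r - 1" using h by (meson not_le)
    then show ?thesis by (simp add: Vcarrier_def)
  qed (simp add: Vcarrier_def)
qed

lemma mod_carrier: "r \<ge> 2 \<Longrightarrow> p mod Ucheb (r-1) \<in> Vcarrier r"
  using degree_mod_less[of "Ucheb (r-1) :: rat poly" p] Ucheb_ne0 Ucheb_deg[of "r-1", where 'a=rat]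
  by (auto simp: Vcarrier_def)

lemma Vmult_carrier: "r \<ge> 2 \<Longrightarrow> Vmult r a b \<in> Vcarrier r"
  unfolding Vmult_def by (rule mod_carrier)

lemma small_mod: "r \<ge> 2 \<Longrightarrow> p \<in> Vcarrier r \<Longrightarrow> p mod Ucheb (r-1) = (p::rat poly)"
  using Ucheb_deg[of "r-1", where 'a=rat] by (auto simp: Vcarrier_def intro!: mod_poly_less)

lemma Vone_eq: "r \<ge> 2 \<Longrightarrow> Vone r = 1"
  unfolding Vone_def by (rule small_mod) (auto simp: Vcarrier_def)

lemma Ve_eq: "r \<ge> 2 \<Longrightarrow> n < r - 1 \<Longrightarrow> Ve r n = Ucheb n"
  unfolding Ve_def by (rule small_mod) (auto simp: carrier_iff Ucheb_coeff_high)

lemma carrier_add: "r \<ge> 2 \<Longrightarrow> a \<in> Vcarrier r \<Longrightarrow> b \<in> Vcarrier r \<Longrightarrow> a + b \<in> Vcarrier r"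
  by (simp add: carrier_iff)
lemma carrier_smult: "r \<ge> 2 \<Longrightarrow> a \<in> Vcarrier r \<Longrightarrow> smult c a \<in> Vcarrier r"
  by (simp add: carrier_iff)

lemma repr:
  "(\<forall>j\<ge>m. coeff (f::rat poly) j = 0) \<Longrightarrow> \<exists>c. (\<forall>n\<ge>m. c n = 0) \<and> f = (\<Sum>n<m. smult (c n) (Ucheb n))
      \<and> ((\<forall>j. odd j \<longrightarrow> coeff f j = 0) \<longrightarrow> (\<forall>n. odd n \<longrightarrow> c n = 0))"
proof (induction m arbitrary: f)
  case 0
  then have "f = 0" by (intro poly_eqI) simp
  then show ?case by (intro exI[of _ "\<lambda>_. 0"]) simp
next
  case (Suc m)
  define a where "a = coeff f m"
  define g where "g = f - smult a (Ucheb m)"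
  have "\<forall>j\<ge>m. coeff g j = 0"
  proof (intro allI impI)
    fix j assume "m \<le> j"
    then consider "j = m" | "m < j" by linarith
    then show "coeff g j = 0"
    proof cases
      case 1 then show ?thesis using Ucheb_deg[of m, where 'a=rat] by (simp add: g_def a_def)
    next
      case 2 then show ?thesis using Suc.prems by (simp add: g_def Ucheb_coeff_high)
    qed
  qed
  from Suc.IH[OF this] obtain c where c: "\<forall>n\<ge>m. c n = 0" "g = (\<Sum>n<m. smult (c n) (Ucheb n))"
    "(\<forall>j. odd j \<longrightarrow> coeff g j = 0) \<longrightarrow> (\<forall>n. odd n \<longrightarrow> c n = 0)" by blast
  define c' where "c' = c(m := a)"
  have s: "(\<Sum>n<m. smult (c' n) (Ucheb n)) = (\<Sum>n<m. smult (c n) (Ucheb n))"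
    by (intro sum.cong) (auto simp: c'_def)
  have "f = g + smult a (Ucheb m)" by (simp add: g_def)
  also have "\<dots> = (\<Sum>n<Suc m. smult (c' n) (Ucheb n))" using c(2) s by (simp add: c'_def)
  finally have f: "f = (\<Sum>n<Suc m. smult (c' n) (Ucheb n))" .
  have ev: "\<forall>n. odd n \<longrightarrow> c' n = 0" if fe: "\<forall>j. odd j \<longrightarrow> coeff f j = 0"
  proof -
    have "\<forall>j. odd j \<longrightarrow> coeff g j = 0"
    proof (intro allI impI)
      fix j :: nat assume "odd j"
      show "coeff g j = 0"
      proof (cases "odd m")
        case True then have "a = 0" using fe by (simp add: a_def)
        then show ?thesis using fe \<open>odd j\<close> by (simp add: g_def)
      next
        case False then have "odd (m + j)" using \<open>odd j\<close> by simp
        then show ?thesis using fe \<open>odd j\<close> by (simp add: g_def Ucheb_parity)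
      qed
    qed
    then have "\<forall>n. odd n \<longrightarrow> c n = 0" using c(3) by blast
    then show ?thesis using fe by (auto simp: c'_def a_def)
  qed
  show ?case
    by (intro exI[of _ c'] conjI) (use c(1) f ev in \<open>auto simp: c'_def\<close>)
qed


lemma aux1: fixes x c :: complex assumes "x \<noteq> 1" "x \<noteq> 0"
  shows "(1 - c)/(1 - x) + (1 - c)/(1 - inverse x) = 1 - c"
proof -
  have "1 - x \<noteq> 0" "x - 1 \<noteq> 0" using assms by auto
  moreover have "1 - inverse x = (x - 1) / x" using assms by (simp add: field_simps)
  ultimately have "(1 - c)/(1 - inverse x) = - ((1-c) * x / (1 - x))" using assms by (simp add: field_simps)
  then have "(1 - c)/(1 - x) + (1 - c)/(1 - inverse x) = (1 - c)/(1 - x) - (1-c) * x / (1 - x)" by simp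
  also have "\<dots> = ((1 - c) - (1-c)*x) / (1-x)" by (rule diff_divide_distrib[symmetric])
  also have "\<dots> = (1-c)*(1-x) / (1-x)" by (metis mult.right_neutral right_diff_distrib)
  also have "\<dots> = 1 - c" using \<open>1 - x \<noteq> 0\<close> by simp
  finally show ?thesis .
qed
lemma aux2: assumes "int j = 2 * n * int r" "0 < j" "j < 2 * r" shows False
proof -
  have "0 < n"
  proof (rule ccontr)
    assume "\<not> 0 < n" then have "2 * n * int r \<le> 0" by (simp add: mult_nonpos_nonneg)
    then show False using assms by simp
  qed
  then have "2 * int r \<le> 2 * n * int r" by (simp add: mult_right_mono)
  then show False using assms by linarith
qed

definition om :: "nat \<Rightarrow> complex" where "om r = exp (\<i> * of_real (pi / real r))"

lemma om_ne0: "om r \<noteq> 0" by (simp add: om_def)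

lemma om_pow: "om r ^ k = exp (\<i> * of_real (real k * pi / real r))"
proof -
  have "om r ^ k = exp (of_nat k * (\<i> * of_real (pi / real r)))"
    unfolding om_def by (rule exp_of_nat_mult[symmetric])
  also have "of_nat k * (\<i> * of_real (pi / real r)) = \<i> * of_real (real k * pi / real r)" by simp
  finally show ?thesis .
qed

lemma om_pow_r: "r > 0 \<Longrightarrow> om r ^ r = -1"
  using om_pow[of r r] by simp

lemma om_pow_jr: assumes "r > 0" shows "om r ^ (j * r) = (-1) ^ j"
proof -
  have "om r ^ (j * r) = (om r ^ r) ^ j" by (simp add: power_mult[symmetric] mult.commute)
  then show ?thesis using om_pow_r[OF assms] by simp
qed

lemma om_pow_ne1: assumes "0 < j" "j < 2 * r" shows "om r ^ j \<noteq> 1"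
proof
  assume "om r ^ j = 1"
  then have "exp (\<i> * of_real (real j * pi / real r)) = 1" by (simp add: om_pow)
  then obtain n :: int where n: "real j * pi / real r = of_int (2 * n) * pi"
    by (auto simp: exp_eq_1)
  have r: "r > 0" using assms by simp
  then have "real j = of_int (2 * n) * real r" using n by (simp add: field_simps)
  then have "real_of_int (int j) = real_of_int (2 * n * int r)" by simp
  then have "int j = 2 * n * int r" by (simp only: of_int_eq_iff)
  then show False using assms aux2 by blast
qed

lemma G_sum: assumes "0 < j" "j < 2 * r"
  shows "(\<Sum>k<r. om r ^ (j * k) + inverse (om r ^ (j * k))) = 1 - (-1) ^ j"
proof -
  define x where "x = om r ^ j"
  have x1: "x \<noteq> 1" using om_pow_ne1[OF assms] by (simp add: x_def)
  have x0: "x \<noteq> 0" by (simp add: x_def om_ne0)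
  have xr: "x ^ r = (-1) ^ j" using assms by (simp add: x_def flip: power_mult) (simp add: om_pow_jr mult.commute)
  have ix1: "inverse x \<noteq> 1" using x1 x0 by (metis inverse_1 inverse_inverse_eq)
  have "(\<Sum>k<r. om r ^ (j * k) + inverse (om r ^ (j * k))) = (\<Sum>k<r. x ^ k) + (\<Sum>k<r. inverse x ^ k)"
    by (simp add: sum.distrib x_def power_mult power_inverse)
  also have "\<dots> = (1 - x ^ r) / (1 - x) + (1 - inverse x ^ r) / (1 - inverse x)"
    using x1 ix1 by (simp add: sum_gp_strict)
  also have "\<dots> = 1 - (-1) ^ j"
  proof -
    have "inverse x ^ r = (-1) ^ j" using xr by (simp add: power_inverse) (cases "even j"; simp)
    then show ?thesis using xr aux1[OF x1 x0] by simp
  qed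
  finally show ?thesis .
qed

lemma P_eval: assumes "t \<noteq> 0"
  shows "poly (Ucheb n) (\<i> * (t + inverse t)) * (t - inverse t) = \<i> ^ n * (t ^ (n+1) - inverse t ^ (n+1))"
proof (induction n rule: Ucheb.induct)
  case 1 then show ?case by simp
next
  case 2 then show ?case using assms by (simp add: power2_eq_square algebra_simps)
next
  case (3 n)
  define u where "u = inverse t"
  have tu: "t * u = 1" using assms by (simp add: u_def)
  have e1: "t * u ^ (n+2) = u ^ (n+1)" using tu by (simp add: power_Suc mult.assoc[symmetric] mult.commute mult.left_commute)
  have e2: "u * t ^ (n+2) = t ^ (n+1)" using tu by (simp add: power_Suc mult.assoc[symmetric] mult.commute mult.left_commute)
  have "poly (Ucheb (Suc (Suc n))) (\<i> * (t + u)) * (t - u)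
      = \<i> * (t + u) * (poly (Ucheb (Suc n)) (\<i> * (t + u)) * (t - u)) + poly (Ucheb n) (\<i> * (t + u)) * (t - u)"
    by (simp add: algebra_simps)
  also have "\<dots> = \<i> * (t + u) * (\<i> ^ (n+1) * (t ^ (n+2) - u ^ (n+2))) + \<i> ^ n * (t ^ (n+1) - u ^ (n+1))"
    using 3 by (simp add: u_def)
  also have "\<dots> = \<i> ^ (n+2) * ((t + u) * (t ^ (n+2) - u ^ (n+2)) - (t ^ (n+1) - u ^ (n+1)))"
    by (simp add: algebra_simps power_Suc)
  also have "(t + u) * (t ^ (n+2) - u ^ (n+2)) - (t ^ (n+1) - u ^ (n+1)) = t ^ (n+3) - u ^ (n+3)"
  proof -
    have h3: "t * t^(n+2) = t^(n+3)" "u*u^(n+2) = u^(n+3)" by (simp_all add: eval_nat_numeral)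
    have "(t+u)*(t^(n+2)-u^(n+2)) - (t^(n+1)-u^(n+1))
        = (t*t^(n+2) - u*u^(n+2)) + (u*t^(n+2) - t^(n+1)) - (t*u^(n+2) - u^(n+1))"
      by (simp add: algebra_simps)
    also have "\<dots> = t ^ (n+3) - u ^ (n+3)" by (simp only: h3 e1 e2) simp
    finally show ?thesis .
  qed
  finally show ?case unfolding u_def by (simp add: eval_nat_numeral)
qed


lemma pw: fixes t :: complex assumes "t \<noteq> 0" "b \<le> a"
  shows "(t^a - inverse t^a) * (t^b - inverse t^b) = (t^(a+b) + inverse t^(a+b)) - (t^(a-b) + inverse t^(a-b))"
proof -
  define p where "p = t^(a-b)"
  define q where "q = t^b"
  have a: "t^a = p * q" using assms by (simp add: p_def q_def flip: power_add)
  have ab: "t^(a+b) = p * q * q" using assms by (simp add: p_def q_def flip: power_add)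
  have p0: "p \<noteq> 0" "q \<noteq> 0" using assms by (auto simp: p_def q_def)
  have "(t^a - inverse t^a) * (t^b - inverse t^b) = (p*q - inverse (p*q)) * (q - inverse q)"
    by (simp add: power_inverse a q_def)
  also have "\<dots> = (p*q*q + inverse (p*q*q)) - (p + inverse p)"
  proof -
    have i1: "p*q*inverse q = p" using p0 by simp
    have i2: "inverse (p*q) * q = inverse p" using p0 by (simp add: inverse_mult_distrib)
    have i3: "inverse (p*q) * inverse q = inverse (p*q*q)" by (simp add: inverse_mult_distrib)
    have "(p*q - inverse (p*q)) * (q - inverse q) = p*q*q - p*q*inverse q - inverse (p*q) * q + inverse (p*q) * inverse q"
      by (simp add: algebra_simps)
    also have "\<dots> = p*q*q - p - inverse p + inverse (p*q*q)" by (simp only: i1 i2 i3)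
    also have "\<dots> = (p*q*q + inverse (p*q*q)) - (p + inverse p)" by (simp add: algebra_simps)
    finally show ?thesis .
  qed
  also have "\<dots> = (t^(a+b) + inverse t^(a+b)) - (t^(a-b) + inverse t^(a-b))"
    by (simp add: power_inverse ab p_def)
  finally show ?thesis .
qed

lemma sum_shift0: "(r::nat) \<ge> 1 \<Longrightarrow> (\<Sum>k<r. f k) = f 0 + (\<Sum>k\<in>{1..r-1}. f k)"
proof -
  assume "r \<ge> 1"
  then have "{..<r} = insert 0 {1..r-1}" by (cases r) auto
  then show ?thesis by simp
qed

lemma E_pow: "(om r ^ k) ^ j = om r ^ (j * k)" by (simp add: power_mult[symmetric] mult.commute)

lemma sum_E0: "(\<Sum>k<r. om r ^ (0 * k) + inverse (om r ^ (0 * k))) = 2 * of_nat r" by simp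

lemma ortho_raw: assumes "1 \<le> a" "a \<le> r - 1" "1 \<le> b" "b \<le> r - 1" "b \<le> a"
  shows "(\<Sum>k\<in>{1..r-1}. ((om r ^ k)^a - inverse (om r ^ k)^a) * ((om r ^ k)^b - inverse (om r ^ k)^b))
        = (if a = b then - 2 * of_nat r else 0)"
proof -
  have r: "r \<ge> 2" using assms by simp
  define f where "f k = ((om r ^ k)^a - inverse (om r ^ k)^a) * ((om r ^ k)^b - inverse (om r ^ k)^b)" for k
  have "(\<Sum>k<r. f k) = f 0 + (\<Sum>k\<in>{1..r-1}. f k)" using r by (intro sum_shift0) simp
  then have s: "(\<Sum>k\<in>{1..r-1}. f k) = (\<Sum>k<r. f k)" by (simp add: f_def)
  have fk: "f k = (om r ^ ((a+b)*k) + inverse (om r ^ ((a+b)*k))) - (om r ^ ((a-b)*k) + inverse (om r ^ ((a-b)*k)))" for k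
    unfolding f_def using pw[of "om r ^ k" b a] assms om_ne0 by (simp add: E_pow power_inverse)
  have G1: "(\<Sum>k<r. om r ^ ((a+b)*k) + inverse (om r ^ ((a+b)*k))) = 1 - (-1)^(a+b)"
    using assms by (intro G_sum) auto
  show ?thesis
  proof (cases "a = b")
    case True
    then have "(\<Sum>k<r. f k) = (1 - (-1)^(a+b)) - 2 * of_nat r"
      using G1 by (simp add: fk sum_subtractf)
    then show ?thesis using s True by (simp add: f_def)
  next
    case False
    then have G2: "(\<Sum>k<r. om r ^ ((a-b)*k) + inverse (om r ^ ((a-b)*k))) = 1 - (-1)^(a-b)"
      using assms by (intro G_sum) auto
    have "(-1::complex)^(a+b) = (-1)^(a-b)"
    proof -
      have e: "a + b = (a - b) + 2 * b" using assms by simp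
      have "(-1::complex)^(a+b) = (-1)^(a-b) * ((-1)^2)^b" unfolding e power_add power_mult by simp
      then show ?thesis by simp
    qed
    then have "(\<Sum>k<r. f k) = 0" using G1 G2 by (simp add: fk sum_subtractf)
    then show ?thesis using s False by (simp add: f_def)
  qed
qed

lemma ortho_raw2: assumes "1 \<le> a" "a \<le> r - 1" "1 \<le> b" "b \<le> r - 1"
  shows "(\<Sum>k\<in>{1..r-1}. ((om r ^ k)^a - inverse (om r ^ k)^a) * ((om r ^ k)^b - inverse (om r ^ k)^b))
        = (if a = b then - 2 * of_nat r else 0)"
proof (cases "b \<le> a")
  case True then show ?thesis using ortho_raw assms by blast
next
  case False
  then show ?thesis using ortho_raw[of b r a] assms by (simp add: mult.commute)
qed

lemma omega_raw: assumes "1 \<le> k" "k \<le> r - 1"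
  shows "(\<Sum>a\<in>{1..r-1}. ((om r ^ k)^a - inverse (om r ^ k)^a)^2) = - 2 * of_nat r"
proof -
  have r: "r \<ge> 2" using assms by simp
  define f where "f a = ((om r ^ k)^a - inverse (om r ^ k)^a)^2" for a
  have "(\<Sum>a<r. f a) = f 0 + (\<Sum>a\<in>{1..r-1}. f a)" using r by (intro sum_shift0) simp
  then have s: "(\<Sum>a\<in>{1..r-1}. f a) = (\<Sum>a<r. f a)" by (simp add: f_def)
  have fa: "f a = (om r ^ ((2*k)*a) + inverse (om r ^ ((2*k)*a))) - 2" for a
  proof -
    have "f a = ((om r ^ k)^a - inverse (om r ^ k)^a) * ((om r ^ k)^a - inverse (om r ^ k)^a)"
      by (simp add: f_def power2_eq_square)
    have "(a+a)*k = (2*k)*a" by simp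
    then have h: "(om r ^ k)^(a+a) = om r ^ ((2*k)*a)" by (simp only: E_pow)
    have "f a = ((om r ^ k)^(a+a) + inverse (om r ^ k)^(a+a)) - 2"
      using pw[of "om r ^ k" a a] om_ne0 by (simp add: f_def power2_eq_square)
    then show ?thesis using h by (simp add: power_inverse)
  qed
  have G: "(\<Sum>a<r. om r ^ ((2*k)*a) + inverse (om r ^ ((2*k)*a))) = 1 - (-1)^(2*k)"
    using assms by (intro G_sum) auto
  have "(\<Sum>a<r. f a) = - 2 * of_nat r" using G by (simp add: fa sum_subtractf)
  then show ?thesis using s by (simp add: f_def)
qed


definition tk :: "nat \<Rightarrow> nat \<Rightarrow> complex" where "tk r k = om r ^ k"
definition zk :: "nat \<Rightarrow> nat \<Rightarrow> complex" where "zk r k = \<i> * (tk r k + inverse (tk r k))"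
definition sk :: "nat \<Rightarrow> nat \<Rightarrow> complex" where "sk r k = tk r k - inverse (tk r k)"
definition Omk :: "nat \<Rightarrow> nat \<Rightarrow> complex" where "Omk r k = - 2 * of_nat r / (sk r k)^2"
definition wk :: "nat \<Rightarrow> nat \<Rightarrow> complex" where "wk r k = - ((sk r k)^2) / (2 * of_nat r)"

lemma tk_cis: "tk r k = cis (real k * pi / real r)"
  by (simp add: tk_def om_pow cis_conv_exp)

lemma tk_ne0: "tk r k \<noteq> 0" by (simp add: tk_cis)

lemma tk_plus: "tk r k + inverse (tk r k) = 2 * of_real (cos (real k * pi / real r))"
  by (simp add: tk_cis complex_eq_iff)

lemma tk_minus: "tk r k - inverse (tk r k) = 2 * \<i> * of_real (sin (real k * pi / real r))"
  by (simp add: tk_cis complex_eq_iff)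

lemma sin_pos: assumes "1 \<le> k" "k \<le> r - 1" shows "sin (real k * pi / real r) > 0"
proof -
  have "r \<ge> 2" using assms by simp
  have "0 < real k * pi / real r" using assms by simp
  moreover have "real k * pi / real r < pi" using assms by (simp add: field_simps)
  ultimately show ?thesis by (rule sin_gt_zero)
qed

lemma sk_ne0: assumes "1 \<le> k" "k \<le> r - 1" shows "sk r k \<noteq> 0"
  using sin_pos[OF assms] by (simp add: sk_def tk_minus)

lemma zk_eq: "zk r k = 2 * \<i> * of_real (cos (real k * pi / real r))"
  by (simp add: zk_def tk_plus)

lemma zk_inj: assumes "k \<in> {1..r-1}" "k' \<in> {1..r-1}" "zk r k = zk r k'" shows "k = k'"
proof -
  have "cos (real k * pi / real r) = cos (real k' * pi / real r)" using assms(3) by (simp add: zk_eq)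
  moreover have "real k * pi / real r \<le> pi" "real k' * pi / real r \<le> pi" using assms(1,2) by (auto simp: field_simps)
  moreover have "0 \<le> real k * pi / real r" "0 \<le> real k' * pi / real r" by simp_all
  ultimately have "real k * pi / real r = real k' * pi / real r"
    using cos_inj_pi[of "real k * pi / real r" "real k' * pi / real r"] by blast
  moreover have "real r > 0" using assms by auto
  ultimately have "real k = real k'" by (simp add: field_simps)
  then show ?thesis by simp
qed

lemma U_root: assumes "1 \<le> k" "k \<le> r - 1" shows "poly (Ucheb (r-1)) (zk r k) = 0"
proof -
  have r: "r \<ge> 2" using assms by simp
  have "poly (Ucheb (r-1)) (zk r k) * sk r k = \<i>^(r-1) * (tk r k ^ (r-1+1) - inverse (tk r k) ^ (r-1+1))"
    unfolding zk_def sk_def by (rule P_eval[OF tk_ne0])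
  also have tr: "tk r k ^ (r-1+1) = (-1)^k"
  proof -
    have "tk r k ^ (r-1+1) = om r ^ (k * r)" using r by (simp add: tk_def power_mult)
    then show ?thesis using r om_pow_jr[of r k] by simp
  qed
  also have "inverse (tk r k) ^ (r-1+1) = (-1)^k"
  proof -
    have "inverse (tk r k) ^ (r-1+1) = inverse (tk r k ^ (r-1+1))" by (rule power_inverse)
    also have "\<dots> = inverse ((-1::complex)^k)" using tr by (simp only:)
    also have "\<dots> = (-1)^k" by (cases "even k") auto
    finally show ?thesis .
  qed
  finally show ?thesis using sk_ne0[OF assms] by simp
qed

lemma zk_card: "card (zk r ` {1..r-1}) = r - 1"
proof -
  have "inj_on (zk r) {1..r-1}" using zk_inj by (metis inj_onI)
  then show ?thesis by (simp add: card_image)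
qed

lemma Ucheb_cplx_ne0: "(Ucheb n :: complex poly) \<noteq> 0" by (rule Ucheb_ne0)

lemma roots_all: assumes "r \<ge> 2" "poly (Ucheb (r-1)) z = 0" shows "\<exists>k\<in>{1..r-1}. z = zk r k"
proof (rule ccontr)
  assume "\<not> ?thesis"
  then have nz: "z \<notin> zk r ` {1..r-1}" by auto
  have sub: "insert z (zk r ` {1..r-1}) \<subseteq> {x. poly (Ucheb (r-1)) x = 0}"
    using assms U_root by auto
  have "card (insert z (zk r ` {1..r-1})) \<le> card {x. poly (Ucheb (r-1) :: complex poly) x = 0}"
    by (intro card_mono sub poly_roots_finite Ucheb_ne0)
  also have "\<dots> \<le> degree (Ucheb (r-1) :: complex poly)" by (intro card_poly_roots_bound Ucheb_ne0)
  also have "\<dots> = r - 1" using Ucheb_deg by blast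
  finally show False using nz zk_card[of r] by simp
qed

lemma carrier_zero: assumes "r \<ge> 2" "f \<in> Vcarrier r" "\<forall>k\<in>{1..r-1}. Veval (zk r k) f = 0" shows "f = 0"
proof (rule ccontr)
  assume f0: "f \<noteq> 0"
  define p where "p = (map_poly of_rat f :: complex poly)"
  have p0: "p \<noteq> 0" using f0 by (simp add: p_def map_poly_eq_0_iff)
  have dp: "degree p < r - 1" using f0 assms(2) by (simp add: p_def degree_map_poly Vcarrier_def)
  have sub: "zk r ` {1..r-1} \<subseteq> {x. poly p x = 0}" using assms(3) by (auto simp: p_def Veval_def)
  have "card (zk r ` {1..r-1}) \<le> card {x. poly p x = 0}"
    by (intro card_mono sub poly_roots_finite p0)
  also have "\<dots> \<le> degree p" by (intro card_poly_roots_bound p0)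
  finally show False using dp zk_card[of r] by simp
qed

lemma sum_Suc_shift: "(\<Sum>n<m. g (Suc n)) = (\<Sum>a\<in>{1..m}. g a)"
  by (induction m) (auto simp: atLeastAtMostSuc_conv add.commute)

lemma PnS: "poly (Ucheb n) (zk r k) * sk r k = \<i>^n * (tk r k ^ (n+1) - inverse (tk r k) ^ (n+1))"
  unfolding zk_def sk_def by (rule P_eval[OF tk_ne0])

lemma ortho: assumes "r \<ge> 2" "m < r - 1" "n < r - 1"
  shows "(\<Sum>k\<in>{1..r-1}. wk r k * poly (Ucheb m) (zk r k) * poly (Ucheb n) (zk r k)) = (if m = n then (-1)^n else 0)"
proof -
  have "(\<Sum>k\<in>{1..r-1}. wk r k * poly (Ucheb m) (zk r k) * poly (Ucheb n) (zk r k))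
      = (\<Sum>k\<in>{1..r-1}. - (\<i>^m * \<i>^n) / (2 * of_nat r) * ((tk r k ^ (m+1) - inverse (tk r k) ^ (m+1)) * (tk r k ^ (n+1) - inverse (tk r k) ^ (n+1))))"
  proof (intro sum.cong refl)
    fix k
    have "wk r k * poly (Ucheb m) (zk r k) * poly (Ucheb n) (zk r k)
        = - (poly (Ucheb m) (zk r k) * sk r k) * (poly (Ucheb n) (zk r k) * sk r k) / (2 * of_nat r)"
      by (simp add: wk_def power2_eq_square)
    then show "wk r k * poly (Ucheb m) (zk r k) * poly (Ucheb n) (zk r k) = - (\<i>^m * \<i>^n) / (2 * of_nat r) * ((tk r k ^ (m+1) - inverse (tk r k) ^ (m+1)) * (tk r k ^ (n+1) - inverse (tk r k) ^ (n+1)))"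
      by (simp add: PnS)
  qed
  also have "\<dots> = - (\<i>^m * \<i>^n) / (2 * of_nat r) * (\<Sum>k\<in>{1..r-1}. (tk r k ^ (m+1) - inverse (tk r k) ^ (m+1)) * (tk r k ^ (n+1) - inverse (tk r k) ^ (n+1)))"
    by (simp add: sum_distrib_left)
  also have "(\<Sum>k\<in>{1..r-1}. (tk r k ^ (m+1) - inverse (tk r k) ^ (m+1)) * (tk r k ^ (n+1) - inverse (tk r k) ^ (n+1)))
      = (if m + 1 = n + 1 then - 2 * of_nat r else 0)"
    unfolding tk_def using assms by (intro ortho_raw2) auto
  finally have eq: "(\<Sum>k\<in>{1..r-1}. wk r k * poly (Ucheb m) (zk r k) * poly (Ucheb n) (zk r k))
     = - (\<i>^m * \<i>^n) / (2 * of_nat r) * (if m + 1 = n + 1 then - 2 * of_nat r else 0)" .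
  show ?thesis
  proof (cases "m = n")
    case True
    have ii: "\<i>^n * \<i>^n = ((-1)::complex)^n" by (simp add: power_mult_distrib[symmetric])
    have r0: "(of_nat r :: complex) \<noteq> 0" using assms by simp
    show ?thesis using eq True r0 ii by simp
  next
    case False then show ?thesis using eq by simp
  qed
qed

lemma omega_eval: assumes "1 \<le> k" "k \<le> r - 1"
  shows "(\<Sum>n<r-1. (-1)^n * poly (Ucheb n) (zk r k)^2) = Omk r k"
proof -
  have s: "sk r k \<noteq> 0" using sk_ne0[OF assms] .
  have "(\<Sum>n<r-1. (-1)^n * poly (Ucheb n) (zk r k)^2) * sk r k ^ 2
      = (\<Sum>n<r-1. (-1)^n * (poly (Ucheb n) (zk r k) * sk r k)^2)"
    by (simp add: sum_distrib_right power_mult_distrib mult.assoc)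
  also have "\<dots> = (\<Sum>n<r-1. (tk r k ^ (Suc n) - inverse (tk r k) ^ (Suc n))^2)"
  proof (intro sum.cong refl)
    fix n
    have ii: "(\<i>^n)^2 = ((-1)::complex)^n" by (simp add: power2_eq_square power_mult_distrib[symmetric])
    have "(-1::complex)^n * (\<i>^n)^2 = 1"
      unfolding ii by (simp add: power_mult_distrib[symmetric])
    then show "(-1)^n * (poly (Ucheb n) (zk r k) * sk r k)^2 = (tk r k ^ (Suc n) - inverse (tk r k) ^ (Suc n))^2"
      by (simp add: PnS power_mult_distrib mult.assoc[symmetric])
  qed
  also have "\<dots> = (\<Sum>a\<in>{1..r-1}. (tk r k ^ a - inverse (tk r k) ^ a)^2)"
    by (rule sum_Suc_shift)
  also have "\<dots> = - 2 * of_nat r" unfolding tk_def using omega_raw[OF assms] .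
  finally have h: "(\<Sum>n<r-1. (-1)^n * poly (Ucheb n) (zk r k)^2) * sk r k ^ 2 = - 2 * of_nat r" .
  define X where "X = (\<Sum>n<r-1. (-1)^n * poly (Ucheb n) (zk r k)^2)"
  have "X = (X * sk r k ^ 2) / sk r k ^ 2" using s by simp
  also have "\<dots> = - 2 * of_nat r / sk r k ^ 2" using h by (simp add: X_def)
  finally show ?thesis by (simp add: X_def Omk_def)
qed

lemma wk_Omk: assumes "1 \<le> k" "k \<le> r - 1" shows "wk r k * Omk r k = 1"
  using sk_ne0[OF assms] assms by (simp add: wk_def Omk_def field_simps)

lemma Omk_real: assumes "1 \<le> k" "k \<le> r - 1"
  shows "Omk r k = of_real (real r / (2 * sin (real k * pi / real r)^2))"
proof -
  have "sk r k ^ 2 = - 4 * of_real (sin (real k * pi / real r))^2"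
    by (simp add: sk_def tk_minus power_mult_distrib)
  then show ?thesis using sin_pos[OF assms] by (simp add: Omk_def field_simps)
qed


lemma Veval_Vmult: assumes "1 \<le> k" "k \<le> r - 1"
  shows "Veval (zk r k) (Vmult r a b) = Veval (zk r k) a * Veval (zk r k) b"
  unfolding Vmult_def using U_root[OF assms] by (simp add: Veval_mod Veval_mult)

lemma Veval_Vone: "r \<ge> 2 \<Longrightarrow> Veval z (Vone r) = 1"
  by (simp add: Vone_eq Veval_1)

lemma Veval_Ve: assumes "1 \<le> k" "k \<le> r - 1"
  shows "Veval (zk r k) (Ve r n) = poly (Ucheb n) (zk r k)"
  unfolding Ve_def using U_root[OF assms] by (simp add: Veval_mod Veval_Ucheb)

lemma Veval_VOmega: assumes "1 \<le> k" "k \<le> r - 1"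
  shows "Veval (zk r k) (VOmega r) = Omk r k"
proof -
  have "Veval (zk r k) (VOmega r) = (\<Sum>n<r-1. (-1)^n * poly (Ucheb n) (zk r k)^2)"
    unfolding VOmega_def Veval_sum Veval_smult
    by (intro sum.cong refl) (simp add: Veval_Vmult[OF assms] Veval_Ve[OF assms] power2_eq_square of_rat_power)
  also have "\<dots> = Omk r k" by (rule omega_eval[OF assms])
  finally show ?thesis .
qed

definition Cf :: "nat \<Rightarrow> rat poly \<Rightarrow> nat \<Rightarrow> complex" where
  "Cf r f n = (if n < r - 1 then (-1)^n * (\<Sum>k\<in>{1..r-1}. wk r k * Veval (zk r k) f * poly (Ucheb n) (zk r k)) else 0)"

lemma coord_char:
  assumes r: "r \<ge> 2" and c: "\<forall>n\<ge>r-1. c n = 0" and f: "f = (\<Sum>n<r-1. smult (c n) (Ve r n))"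
  shows "of_rat (c n) = Cf r f n"
proof (cases "n < r - 1")
  case False then show ?thesis using c by (simp add: Cf_def)
next
  case True
  have ev: "Veval (zk r k) f = (\<Sum>m<r-1. of_rat (c m) * poly (Ucheb m) (zk r k))" if "k \<in> {1..r-1}" for k
    unfolding f Veval_sum Veval_smult using that by (intro sum.cong refl) (simp add: Veval_Ve)
  have "(\<Sum>k\<in>{1..r-1}. wk r k * Veval (zk r k) f * poly (Ucheb n) (zk r k))
      = (\<Sum>k\<in>{1..r-1}. \<Sum>m<r-1. of_rat (c m) * (wk r k * poly (Ucheb m) (zk r k) * poly (Ucheb n) (zk r k)))"
    by (intro sum.cong refl) (simp add: ev sum_distrib_left sum_distrib_right algebra_simps)
  also have "\<dots> = (\<Sum>m<r-1. of_rat (c m) * (\<Sum>k\<in>{1..r-1}. wk r k * poly (Ucheb m) (zk r k) * poly (Ucheb n) (zk r k)))"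
    by (subst sum.swap) (simp add: sum_distrib_left)
  also have "\<dots> = (\<Sum>m<r-1. of_rat (c m) * (if m = n then (-1)^n else 0))"
  proof (intro sum.cong refl)
    fix m assume "m \<in> {..<r-1}"
    then show "of_rat (c m) * (\<Sum>k\<in>{1..r-1}. wk r k * poly (Ucheb m) (zk r k) * poly (Ucheb n) (zk r k))
      = of_rat (c m) * (if m = n then (-1)^n else 0)" using ortho[OF r _ True, of m] by simp
  qed
  also have "\<dots> = (\<Sum>m<r-1. if m = n then of_rat (c n) * (-1)^n else 0)" by (intro sum.cong) auto
  also have "\<dots> = of_rat (c n) * (-1)^n" using True by simp
  finally show ?thesis using True by (simp add: Cf_def)
qed

lemma coord_formula:
  assumes r: "r \<ge> 2" and f: "f \<in> Vcarrier r"
  shows "of_rat (Vcoord r f n) = Cf r f n"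
proof -
  have "\<forall>j\<ge>r-1. coeff f j = 0" using f r by (simp add: carrier_iff)
  from repr[OF this] obtain c where c: "\<forall>n\<ge>r-1. c n = 0" "f = (\<Sum>n<r-1. smult (c n) (Ucheb n))" by blast
  have fe: "f = (\<Sum>n<r-1. smult (c n) (Ve r n))" using c(2) r by (simp add: Ve_eq)
  have "Vcoord r f = c"
    unfolding Vcoord_def
  proof (rule the_equality)
    show "(\<forall>n\<ge>r - 1. c n = 0) \<and> f = (\<Sum>n<r - 1. smult (c n) (Ve r n))" using c(1) fe by blast
  next
    fix c' assume h: "(\<forall>n\<ge>r - 1. c' n = 0) \<and> f = (\<Sum>n<r - 1. smult (c' n) (Ve r n))"
    show "c' = c"
    proof
      fix n
      have "(of_rat (c' n) :: complex) = of_rat (c n)"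
        using coord_char[OF r, of c' f n] coord_char[OF r c(1) fe, of n] h by simp
      then show "c' n = c n" by simp
    qed
  qed
  then show ?thesis using coord_char[OF r c(1) fe] by simp
qed

lemma one_carrier: "r \<ge> 2 \<Longrightarrow> (1::rat poly) \<in> Vcarrier r" by (simp add: Vcarrier_def)

lemma coord_one: assumes r: "r \<ge> 2" shows "Vcoord r (Ve r 0) n = (if n = 0 then 1 else 0)"
proof -
  have e: "Ve r 0 = 1" using r by (simp add: Ve_eq)
  have "(of_rat (Vcoord r (Ve r 0) n) :: complex) = Cf r 1 n" unfolding e by (rule coord_formula[OF r one_carrier[OF r]])
  also have "\<dots> = (if n = 0 then 1 else 0)"
  proof (cases "n < r - 1")
    case True
    have "(\<Sum>k\<in>{1..r-1}. wk r k * Veval (zk r k) 1 * poly (Ucheb n) (zk r k))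
        = (\<Sum>k\<in>{1..r-1}. wk r k * poly (Ucheb 0) (zk r k) * poly (Ucheb n) (zk r k))"
      by (simp add: Veval_1)
    also have "\<dots> = (if 0 = n then (-1)^n else 0)" using True r by (intro ortho) auto
    finally show ?thesis using True by (auto simp: Cf_def)
  next
    case False then show ?thesis using r by (simp add: Cf_def)
  qed
  finally show ?thesis by (cases "n = 0") simp_all
qed

lemma counit_formula: assumes r: "r \<ge> 2" and f: "f \<in> Vcarrier r"
  shows "of_rat (Vcounit r f) = (\<Sum>k\<in>{1..r-1}. wk r k * Veval (zk r k) f)"
proof -
  have "Vcounit r f = (\<Sum>n<r-1. (-1)^n * Vcoord r f n * (if n = 0 then 1 else 0))"
    unfolding Vcounit_def Veta_def using r by (simp add: coord_one)
  also have "\<dots> = (\<Sum>n<r-1. if n = 0 then Vcoord r f 0 else 0)" by (intro sum.cong) auto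
  also have "\<dots> = Vcoord r f 0" using r by simp
  finally have "of_rat (Vcounit r f) = (of_rat (Vcoord r f 0) :: complex)" by simp
  also have "\<dots> = Cf r f 0" by (rule coord_formula[OF r f])
  also have "\<dots> = (\<Sum>k\<in>{1..r-1}. wk r k * Veval (zk r k) f)" using r by (simp add: Cf_def)
  finally show ?thesis .
qed

lemma trace_formula: assumes r: "r \<ge> 2"
  shows "of_rat (Vtrace r a) = (\<Sum>k\<in>{1..r-1}. Veval (zk r k) a)"
proof -
  have "(of_rat (Vtrace r a) :: complex) = (\<Sum>n<r-1. Cf r (Vmult r a (Ve r n)) n)"
    unfolding Vtrace_def of_rat_sum using coord_formula[OF r Vmult_carrier[OF r]] by simp
  also have "\<dots> = (\<Sum>n<r-1. \<Sum>k\<in>{1..r-1}. wk r k * Veval (zk r k) a * ((-1)^n * poly (Ucheb n) (zk r k)^2))"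
    by (intro sum.cong refl) (auto simp: Cf_def Veval_Vmult Veval_Ve sum_distrib_left power2_eq_square algebra_simps intro!: sum.cong)
  also have "\<dots> = (\<Sum>k\<in>{1..r-1}. wk r k * Veval (zk r k) a * (\<Sum>n<r-1. (-1)^n * poly (Ucheb n) (zk r k)^2))"
    by (subst sum.swap) (simp add: sum_distrib_left)
  also have "\<dots> = (\<Sum>k\<in>{1..r-1}. Veval (zk r k) a)"
  proof (intro sum.cong refl)
    fix k assume k: "k \<in> {1..r-1}"
    then have "wk r k * Omk r k = 1" by (intro wk_Omk) auto
    moreover have "(\<Sum>n<r-1. (-1)^n * poly (Ucheb n) (zk r k)^2) = Omk r k" using k omega_eval by auto
    ultimately show "wk r k * Veval (zk r k) a * (\<Sum>n<r-1. (-1)^n * poly (Ucheb n) (zk r k)^2) = Veval (zk r k) a"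
      by (simp add: algebra_simps)
  qed
  finally show ?thesis .
qed


lemma of_real_of_rat_c: "(of_real (of_rat q) :: complex) = of_rat q"
  by (cases q) (simp add: of_rat_rat of_real_divide)

lemma of_real_powi: "(of_real (x powi m) :: complex) = of_real x powi m"
proof (cases "m \<ge> 0")
  case True then show ?thesis by (simp add: power_int_nonneg_exp)
next
  case False
  then have "m = - int (nat (- m))" by simp
  then show ?thesis by (metis power_int_minus power_int_of_nat of_real_inverse of_real_power)
qed

lemma Omk_ne0: assumes "1 \<le> k" "k \<le> r - 1" shows "Omk r k \<noteq> 0"
  using wk_Omk[OF assms] by auto

lemma wk_inv: assumes "1 \<le> k" "k \<le> r - 1" shows "wk r k = inverse (Omk r k)"
  using wk_Omk[OF assms] by (metis inverse_unique mult.commute)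

lemma Vone_carrier: "r \<ge> 2 \<Longrightarrow> Vone r \<in> Vcarrier r" by (simp add: Vone_eq one_carrier)

lemma Vpow_carrier: "r \<ge> 2 \<Longrightarrow> Vpow r a g \<in> Vcarrier r"
  by (cases g) (simp_all add: Vone_carrier Vmult_carrier)

lemma Veval_Vpow: assumes "1 \<le> k" "k \<le> r - 1"
  shows "Veval (zk r k) (Vpow r a g) = Veval (zk r k) a ^ g"
  using assms by (induction g) (simp_all add: Veval_Vone Veval_Vmult)

lemma omega_coprime: assumes r: "r \<ge> 2" shows "coprime (VOmega r) (Ucheb (r-1) :: rat poly)"
proof (rule coprimeI)
  fix d :: "rat poly" assume d1: "d dvd VOmega r" and d2: "d dvd Ucheb (r-1)"
  show "is_unit d"
  proof (rule ccontr)
    assume nu: "\<not> is_unit d"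
    have d0: "d \<noteq> 0" using d2 Ucheb_ne0[of "r-1", where 'a=rat] by auto
    then have "degree d \<noteq> 0" using nu is_unit_iff_degree by blast
    then have "degree (map_poly of_rat d :: complex poly) \<noteq> 0" by (simp add: degree_map_poly)
    then have "\<not> constant (poly (map_poly of_rat d :: complex poly))" by (simp add: constant_degree)
    then obtain z where z: "poly (map_poly of_rat d :: complex poly) z = 0"
      using fundamental_theorem_of_algebra by blast
    then have zd: "Veval z d = 0" by (simp add: Veval_def)
    from d2 obtain e where "Ucheb (r-1) = d * e" by (auto elim: dvdE)
    then have "Veval z (Ucheb (r-1)) = 0" using zd by (simp add: Veval_mult)
    then have "poly (Ucheb (r-1)) z = 0" by (simp add: Veval_Ucheb)
    then obtain k where k: "k \<in> {1..r-1}" "z = zk r k" using roots_all[OF r] by blast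
    from d1 obtain e' where "VOmega r = d * e'" by (auto elim: dvdE)
    then have "Veval z (VOmega r) = 0" using zd by (simp add: Veval_mult)
    then show False using k Veval_VOmega[of k r] Omk_ne0[of k r] by auto
  qed
qed

lemma Vinv_ex: assumes r: "r \<ge> 2" shows "\<exists>b. b \<in> Vcarrier r \<and> Vmult r (VOmega r) b = Vone r"
proof -
  define U where "U = (Ucheb (r-1) :: rat poly)"
  define s where "s = fst (bezout_coefficients (VOmega r) U)"
  define t where "t = snd (bezout_coefficients (VOmega r) U)"
  have "s * VOmega r + t * U = gcd (VOmega r) U" unfolding s_def t_def by (rule bezout_coefficients_fst_snd)
  also have "gcd (VOmega r) U = 1" using omega_coprime[OF r] by (simp add: U_def coprime_iff_gcd_eq_1)
  finally have st: "s * VOmega r + t * U = 1" .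
  define b where "b = s mod U"
  have "Vmult r (VOmega r) b = (VOmega r * s) mod U" by (simp add: Vmult_def b_def U_def mod_mult_right_eq)
  also have "VOmega r * s = 1 - t * U" using st by (simp add: algebra_simps)
  also have "(1 - t * U) mod U = 1 mod U" by (simp add: mod_diff_eq[symmetric])
  also have "\<dots> = Vone r" by (simp add: Vone_def U_def)
  finally show ?thesis using mod_carrier[OF r, of s] by (auto simp: b_def U_def)
qed

lemma Veval_Vinv: assumes r: "r \<ge> 2" and k: "1 \<le> k" "k \<le> r - 1"
  shows "Veval (zk r k) (Vinv r (VOmega r)) = inverse (Omk r k)"
proof -
  obtain b where b: "b \<in> Vcarrier r" "Vmult r (VOmega r) b = Vone r" using Vinv_ex[OF r] by blast
  have "Vinv r (VOmega r) = b"
    unfolding Vinv_def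
  proof (rule the_equality)
    show "b \<in> Vcarrier r \<and> Vmult r (VOmega r) b = Vone r" using b by blast
  next
    fix b' assume h: "b' \<in> Vcarrier r \<and> Vmult r (VOmega r) b' = Vone r"
    have "b' - b = 0"
    proof (rule carrier_zero[OF r])
      show "b' - b \<in> Vcarrier r" using h b r by (simp add: carrier_iff)
      show "\<forall>k\<in>{1..r - 1}. Veval (zk r k) (b' - b) = 0"
      proof
        fix k assume k: "k \<in> {1..r-1}"
        have "Omk r k * Veval (zk r k) b' = 1" "Omk r k * Veval (zk r k) b = 1"
          using arg_cong[OF conjunct2[OF h], of "Veval (zk r k)"] arg_cong[OF b(2), of "Veval (zk r k)"] k r
          by (auto simp: Veval_Vmult Veval_VOmega Veval_Vone)
        then show "Veval (zk r k) (b' - b) = 0" by (simp add: Veval_diff) (metis mult_cancel_left mult_zero_left zero_neq_one)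
      qed
    qed
    then show "b' = b" by simp
  qed
  moreover have "Omk r k * Veval (zk r k) b = 1"
    using arg_cong[OF b(2), of "Veval (zk r k)"] k r by (simp add: Veval_Vmult Veval_VOmega Veval_Vone)
  ultimately show ?thesis by (simp add: field_simps) (metis mult.commute nonzero_mult_div_cancel_left divide_inverse mult_1_right Omk_ne0[OF k] inverse_unique)
qed

lemma Veval_Vzpow: assumes r: "r \<ge> 2" and k: "1 \<le> k" "k \<le> r - 1"
  shows "Veval (zk r k) (Vzpow r (VOmega r) (int g - 1)) = Omk r k powi (int g - 1)"
proof (cases g)
  case 0
  have "Veval (zk r k) (Vzpow r (VOmega r) (int g - 1)) = inverse (Omk r k)"
    using 0 r k by (simp add: Vzpow_def Veval_Vmult Veval_Vone Veval_Vinv)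
  then show ?thesis using 0 by (simp add: power_int_minus)
next
  case (Suc h)
  then have "int g - 1 = int h" by simp
  then show ?thesis using k by (simp add: Vzpow_def Veval_Vpow Veval_VOmega)
qed

lemma realid: assumes "(s::real) \<noteq> 0"
  shows "(R / (2 * s^2)) powi m = (R/2) powi m * s powi (-(2*m))"
proof -
  have "R / (2 * s^2) = (R/2) / s^2" by simp
  then have "(R / (2 * s^2)) powi m = (R/2) powi m / (s^2) powi m" by (simp add: power_int_divide_distrib)
  also have "(s^2) powi m = s powi (2*m)" by (simp add: power_int_power)
  finally show ?thesis by (simp add: power_int_minus_divide)
qed

theorem part3: assumes r: "r \<ge> 2"
  shows "Vcounit r (Vpow r (VOmega r) g) = Vtrace r (Vzpow r (VOmega r) (int g - 1))
      \<and> real_of_rat (Vtrace r (Vzpow r (VOmega r) (int g - 1)))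
          = (real r / 2) powi (int g - 1) *
            (\<Sum>k=1..r - 1. sin (real k * pi / real r) powi (2 - 2 * int g))"
proof -
  have tr: "(of_rat (Vtrace r (Vzpow r (VOmega r) (int g - 1))) :: complex) = (\<Sum>k\<in>{1..r-1}. Omk r k powi (int g - 1))"
    unfolding trace_formula[OF r] using r by (intro sum.cong refl) (simp add: Veval_Vzpow)
  have "(of_rat (Vcounit r (Vpow r (VOmega r) g)) :: complex) = (\<Sum>k\<in>{1..r-1}. wk r k * Omk r k ^ g)"
    unfolding counit_formula[OF r Vpow_carrier[OF r]] by (intro sum.cong refl) (simp add: Veval_Vpow Veval_VOmega)
  also have "\<dots> = (\<Sum>k\<in>{1..r-1}. Omk r k powi (int g - 1))"
  proof (intro sum.cong refl)
    fix k assume k: "k \<in> {1..r-1}"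
    then have "Omk r k \<noteq> 0" "wk r k = inverse (Omk r k)" using Omk_ne0 wk_inv by auto
    then show "wk r k * Omk r k ^ g = Omk r k powi (int g - 1)"
      by (simp add: power_int_diff field_simps)
  qed
  finally have c1: "Vcounit r (Vpow r (VOmega r) g) = Vtrace r (Vzpow r (VOmega r) (int g - 1))"
    using tr by (metis of_rat_eq_iff)
  have "(of_real (real_of_rat (Vtrace r (Vzpow r (VOmega r) (int g - 1)))) :: complex)
      = of_real ((real r / 2) powi (int g - 1) * (\<Sum>k=1..r - 1. sin (real k * pi / real r) powi (2 - 2 * int g)))"
  proof -
    have "(of_real (real_of_rat (Vtrace r (Vzpow r (VOmega r) (int g - 1)))) :: complex) = (\<Sum>k\<in>{1..r-1}. Omk r k powi (int g - 1))"
      by (simp add: of_real_of_rat_c tr)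
    also have "\<dots> = (\<Sum>k\<in>{1..r-1}. of_real ((real r / 2) powi (int g - 1) * sin (real k * pi / real r) powi (2 - 2 * int g)))"
    proof (intro sum.cong refl)
      fix k assume k: "k \<in> {1..r-1}"
      then have s0: "sin (real k * pi / real r) \<noteq> 0" using sin_pos by force
      have "Omk r k powi (int g - 1) = of_real ((real r / (2 * sin (real k * pi / real r)^2)) powi (int g - 1))"
        using k by (simp add: Omk_real of_real_powi)
      also have "(real r / (2 * sin (real k * pi / real r)^2)) powi (int g - 1)
          = (real r / 2) powi (int g - 1) * sin (real k * pi / real r) powi (-(2 * (int g - 1)))"
        by (rule realid[OF s0])
      also have "-(2 * (int g - 1)) = 2 - 2 * int g" by simp
      finally show "Omk r k powi (int g - 1) = of_real ((real r / 2) powi (int g - 1) * sin (real k * pi / real r) powi (2 - 2 * int g))" .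
    qed
    also have "\<dots> = of_real ((real r / 2) powi (int g - 1) * (\<Sum>k=1..r - 1. sin (real k * pi / real r) powi (2 - 2 * int g)))"
      by (simp add: sum_distrib_left)
    finally show ?thesis .
  qed
  then have c2: "real_of_rat (Vtrace r (Vzpow r (VOmega r) (int g - 1)))
          = (real r / 2) powi (int g - 1) * (\<Sum>k=1..r - 1. sin (real k * pi / real r) powi (2 - 2 * int g))"
    using of_real_eq_iff by blast
  show ?thesis using c1 c2 by blast
qed

theorem part4: assumes r: "r \<ge> 2"
  shows "\<forall>k\<in>{1..r - 1}. let t = exp (\<i> * of_real (real k * pi / real r)) in
        Veval (\<i> * (t + inverse t)) (VOmega r) = - 2 * of_nat r / (t - inverse t)^2"
proof
  fix k assume k: "k \<in> {1..r-1}"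
  have t: "exp (\<i> * of_real (real k * pi / real r)) = tk r k" by (simp add: tk_def om_pow)
  show "let t = exp (\<i> * of_real (real k * pi / real r)) in
        Veval (\<i> * (t + inverse t)) (VOmega r) = - 2 * of_nat r / (t - inverse t)^2"
    unfolding t Let_def using Veval_VOmega[of k r] k by (simp add: zk_def Omk_def sk_def)
qed


lemma lin_sum:
  fixes \<phi> :: "rat poly \<Rightarrow> complex" and m :: nat and B :: "nat \<Rightarrow> rat poly" and c :: "nat \<Rightarrow> rat"
  assumes S0: "0 \<in> S" and Sadd: "\<And>a b. a\<in>S \<Longrightarrow> b\<in>S \<Longrightarrow> a+b \<in> S" and Ssm: "\<And>c a. a\<in>S \<Longrightarrow> smult c a \<in> S"
  and padd: "\<forall>a\<in>S. \<forall>b\<in>S. \<phi> (a+b) = \<phi> a + \<phi> b" and psm: "\<forall>c. \<forall>a\<in>S. \<phi> (smult c a) = of_rat c * \<phi> a"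
  and B: "\<And>j. j<m \<Longrightarrow> B j \<in> S"
  shows "(\<Sum>j<m. smult (c j) (B j)) \<in> S \<and> \<phi> (\<Sum>j<m. smult (c j) (B j)) = (\<Sum>j<m. of_rat (c j) * \<phi> (B j))"
  using B
proof (induction m)
  case 0
  have "\<phi> (smult 0 0) = of_rat 0 * \<phi> 0" using psm S0 by blast
  then show ?case using S0 by simp
next
  case (Suc m)
  then have IH: "(\<Sum>j<m. smult (c j) (B j)) \<in> S" "\<phi> (\<Sum>j<m. smult (c j) (B j)) = (\<Sum>j<m. of_rat (c j) * \<phi> (B j))" by auto
  have Bm: "B m \<in> S" using Suc.prems by simp
  have sm: "smult (c m) (B m) \<in> S" using Ssm Bm by blast
  show ?case using IH sm Sadd padd psm Bm by simp
qed

lemma monom_sum: assumes "\<forall>j\<ge>n. coeff (a::rat poly) j = 0"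
  shows "a = (\<Sum>j<n. smult (coeff a j) (monom 1 j))"
proof (rule poly_eqI)
  fix i
  have "coeff (\<Sum>j<n. smult (coeff a j) (monom 1 j)) i = (\<Sum>j<n. coeff a j * (if j = i then 1 else 0))"
    by (simp add: coeff_sum coeff_monom)
  also have "\<dots> = (\<Sum>j<n. if j = i then coeff a i else 0)" by (intro sum.cong) auto
  also have "\<dots> = coeff a i" using assms by (auto simp: not_less)
  finally show "coeff a i = coeff (\<Sum>j<n. smult (coeff a j) (monom 1 j)) i" by simp
qed

lemma Veval_monom: "Veval z (monom c j) = of_rat c * z ^ j"
  by (simp add: Veval_def map_poly_monom poly_monom)

lemma X_monom: "[:0,1:] * monom (1::rat) j = monom 1 (Suc j)"
  by (simp add: monom_Suc)

lemma monom_carrier: "r \<ge> 2 \<Longrightarrow> j < r - 1 \<Longrightarrow> monom (1::rat) j \<in> Vcarrier r"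
  by (simp add: carrier_iff coeff_monom)

lemma emb_if:
  assumes r: "r \<ge> 2" and k: "1 \<le> k" "k \<le> r - 1" and h: "\<forall>a\<in>Vcarrier r. \<phi> a = Veval (zk r k) a"
  shows "is_embedding_on r (Vcarrier r) \<phi>"
  unfolding is_embedding_on_def
  using h r k Vone_carrier[OF r] Vmult_carrier[OF r]
  by (auto simp: carrier_add carrier_smult Veval_Vone Veval_add Veval_Vmult Veval_smult)

lemma emb_only:
  assumes r: "r \<ge> 3" and e: "is_embedding_on r (Vcarrier r) \<phi>"
  shows "\<exists>k\<in>{1..r-1}. \<forall>a\<in>Vcarrier r. \<phi> a = Veval (zk r k) a"
proof -
  have r2: "r \<ge> 2" using r by simp
  note E = e[unfolded is_embedding_on_def]
  define X where "X = monom (1::rat) 1"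
  have Xc: "X \<in> Vcarrier r" using r by (simp add: X_def monom_carrier)
  define z where "z = \<phi> X"
  have mon: "\<phi> (monom 1 j) = z ^ j" if "j < r - 1" for j
    using that
  proof (induction j)
    case 0 then show ?case using E r2 by (simp add: Vone_eq monom_0 one_pCons[symmetric])
  next
    case (Suc j)
    have "Vmult r X (monom 1 j) = monom 1 (Suc j)"
      unfolding Vmult_def X_def using small_mod[OF r2 monom_carrier[OF r2 Suc.prems]]
      by (simp add: monom_Suc flip: X_monom)
    then have "\<phi> (monom 1 (Suc j)) = \<phi> X * \<phi> (monom 1 j)"
      using E Xc monom_carrier[OF r2] Suc.prems by (metis Suc_lessD)
    then show ?case using Suc by (simp add: z_def)
  qed
  have lin: "\<phi> a = Veval z a" if a: "a \<in> Vcarrier r" for a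
  proof -
    have ca: "\<forall>j\<ge>r-1. coeff a j = 0" using a r2 by (simp add: carrier_iff)
    have "\<phi> (\<Sum>j<r-1. smult (coeff a j) (monom 1 j)) = (\<Sum>j<r-1. of_rat (coeff a j) * \<phi> (monom 1 j))"
      using lin_sum[of "Vcarrier r" \<phi> "r-1" "\<lambda>j. monom 1 j" "coeff a"] E r2
      by (simp add: Vcarrier_def[of r, symmetric] carrier_add carrier_smult monom_carrier) (simp add: Vcarrier_def)
    also have "\<dots> = (\<Sum>j<r-1. of_rat (coeff a j) * z ^ j)" by (intro sum.cong refl) (simp add: mon)
    also have "\<dots> = Veval z (\<Sum>j<r-1. smult (coeff a j) (monom 1 j))"
      by (simp add: Veval_sum Veval_smult Veval_monom)
    finally show ?thesis using monom_sum[OF ca] by simp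
  qed
  define U where "U = (Ucheb (r-1) :: rat poly)"
  have Ud: "degree U = r - 1" "coeff U (r-1) = 1" using Ucheb_deg[of "r-1"] by (auto simp: U_def)
  define R where "R = monom 1 (r-1) - U"
  have Rc: "R \<in> Vcarrier r"
    unfolding carrier_iff[OF r2] R_def using Ud by (auto simp: coeff_monom coeff_eq_0)
  have rr: "1 + (r - 2) = r - 1" using r by simp
  have XX: "X * monom 1 (r-2) = monom 1 (r-1)" by (simp only: X_def mult_monom rr mult_1)
  have "Vmult r X (monom 1 (r-2)) = monom 1 (r-1) mod U"
    unfolding Vmult_def XX U_def ..
  also have "\<dots> = R mod U" by (simp add: R_def)
  also have "\<dots> = R" using small_mod[OF r2 Rc] by (simp add: U_def)
  finally have VR: "Vmult r X (monom 1 (r-2)) = R" .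
  have m1: "r - 2 < r - 1" using r by simp
  have "\<phi> (Vmult r X (monom 1 (r-2))) = \<phi> X * \<phi> (monom 1 (r-2))"
    using E Xc monom_carrier[OF r2 m1] by blast
  then have "\<phi> R = z * z ^ (r-2)" using VR mon[OF m1] by (simp add: z_def)
  moreover have "r - 1 = Suc (r - 2)" using r by simp
  ultimately have "\<phi> R = z ^ (r-1)" by simp
  moreover have "\<phi> R = z ^ (r-1) - poly (Ucheb (r-1)) z"
    using lin[OF Rc] by (simp add: R_def Veval_diff Veval_monom U_def Veval_Ucheb)
  ultimately have "poly (Ucheb (r-1)) z = 0" by simp
  then obtain k where k: "k \<in> {1..r-1}" "z = zk r k" using roots_all[OF r2] by blast
  then show ?thesis using lin by blast
qed

theorem part1: assumes r: "r \<ge> 3"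
  shows "\<forall>\<phi>. is_embedding_on r (Vcarrier r) \<phi> \<longleftrightarrow>
        (\<exists>k\<in>{1..r - 1}. \<forall>a\<in>Vcarrier r.
            \<phi> a = Veval (2 * \<i> * complex_of_real (cos (real k * pi / real r))) a)"
proof (intro allI iffI)
  fix \<phi> assume "is_embedding_on r (Vcarrier r) \<phi>"
  from emb_only[OF r this] obtain k where "k \<in> {1..r-1}" "\<forall>a\<in>Vcarrier r. \<phi> a = Veval (zk r k) a" by blast
  then show "\<exists>k\<in>{1..r - 1}. \<forall>a\<in>Vcarrier r. \<phi> a = Veval (2 * \<i> * complex_of_real (cos (real k * pi / real r))) a"
    by (auto simp: zk_eq)
next
  fix \<phi> assume "\<exists>k\<in>{1..r - 1}. \<forall>a\<in>Vcarrier r. \<phi> a = Veval (2 * \<i> * complex_of_real (cos (real k * pi / real r))) a"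
  then obtain k where k: "k \<in> {1..r-1}" and h: "\<forall>a\<in>Vcarrier r. \<phi> a = Veval (2 * \<i> * complex_of_real (cos (real k * pi / real r))) a" by blast
  have h2: "\<forall>a\<in>Vcarrier r. \<phi> a = Veval (zk r k) a" using h by (simp add: zk_eq)
  have r2: "r \<ge> 2" using r by simp
  show "is_embedding_on r (Vcarrier r) \<phi>" using emb_if[OF r2 _ _ h2] k by auto
qed


lemma Vcoord_eq: assumes r: "r \<ge> 2" and c: "\<forall>n\<ge>r-1. c n = 0" and f: "f = (\<Sum>n<r-1. smult (c n) (Ucheb n))"
  shows "Vcoord r f = c"
proof -
  have fe: "f = (\<Sum>n<r-1. smult (c n) (Ve r n))" using f r by (simp add: Ve_eq)
  show ?thesis
    unfolding Vcoord_def
  proof (rule the_equality)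
    show "(\<forall>n\<ge>r - 1. c n = 0) \<and> f = (\<Sum>n<r - 1. smult (c n) (Ve r n))" using c fe by blast
  next
    fix c' assume h: "(\<forall>n\<ge>r - 1. c' n = 0) \<and> f = (\<Sum>n<r - 1. smult (c' n) (Ve r n))"
    show "c' = c"
    proof
      fix n
      have "(of_rat (c' n) :: complex) = of_rat (c n)"
        using coord_char[OF r, of c' f n] coord_char[OF r c fe, of n] h by simp
      then show "c' n = c n" by simp
    qed
  qed
qed

lemma Vplus_iff: assumes r: "r \<ge> 2"
  shows "f \<in> Vplus r \<longleftrightarrow> f \<in> Vcarrier r \<and> (\<forall>j. odd j \<longrightarrow> coeff f j = 0)"
proof -
  { assume fc: "f \<in> Vcarrier r"
    have "\<forall>j\<ge>r-1. coeff f j = 0" using fc r by (simp add: carrier_iff)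
    from repr[OF this] obtain c where c: "\<forall>n\<ge>r-1. c n = 0" "f = (\<Sum>n<r-1. smult (c n) (Ucheb n))"
      "(\<forall>j. odd j \<longrightarrow> coeff f j = 0) \<longrightarrow> (\<forall>n. odd n \<longrightarrow> c n = 0)" by blast
    have vc: "Vcoord r f = c" using Vcoord_eq[OF r c(1) c(2)] .
    have "(\<forall>n. odd n \<longrightarrow> Vcoord r f n = 0) \<longleftrightarrow> (\<forall>j. odd j \<longrightarrow> coeff f j = 0)"
    proof
      assume h: "\<forall>n. odd n \<longrightarrow> Vcoord r f n = 0"
      show "\<forall>j. odd j \<longrightarrow> coeff f j = 0"
      proof (intro allI impI)
        fix j :: nat assume j: "odd j"
        have "coeff f j = (\<Sum>n<r-1. c n * coeff (Ucheb n) j)" by (subst c(2)) (simp add: coeff_sum)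
        also have "\<dots> = 0"
        proof (intro sum.neutral ballI)
          fix n assume "n \<in> {..<r-1}"
          show "c n * coeff (Ucheb n) j = 0"
          proof (cases "odd n")
            case True then show ?thesis using h vc by simp
          next
            case False then have "odd (n + j)" using j by simp
            then show ?thesis by (simp add: Ucheb_parity)
          qed
        qed
        finally show "coeff f j = 0" .
      qed
    next
      assume "\<forall>j. odd j \<longrightarrow> coeff f j = 0"
      then show "\<forall>n. odd n \<longrightarrow> Vcoord r f n = 0" using c(3) vc by simp
    qed
  }
  then show ?thesis unfolding Vplus_def by blast
qed

lemma Vplus_add: "r \<ge> 2 \<Longrightarrow> a \<in> Vplus r \<Longrightarrow> b \<in> Vplus r \<Longrightarrow> a + b \<in> Vplus r"
  by (simp add: Vplus_iff carrier_add)
lemma Vplus_smult: "r \<ge> 2 \<Longrightarrow> a \<in> Vplus r \<Longrightarrow> smult c a \<in> Vplus r"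
  by (simp add: Vplus_iff carrier_smult)
lemma Vplus_0: "r \<ge> 2 \<Longrightarrow> 0 \<in> Vplus r"
  by (simp add: Vplus_iff Vcarrier_def)
lemma Vplus_Vone: "r \<ge> 2 \<Longrightarrow> Vone r \<in> Vplus r"
  by (simp add: Vplus_iff Vone_eq one_carrier odd_pos)
lemma Vplus_E: "r \<ge> 2 \<Longrightarrow> 2 * j < r - 1 \<Longrightarrow> monom (1::rat) (2*j) \<in> Vplus r"
  by (simp add: Vplus_iff monom_carrier coeff_monom)

lemma even_sum: assumes r: "r \<ge> 2" and N: "r - 1 = 2 * M" and a: "a \<in> Vplus r"
  shows "a = (\<Sum>j<M. smult (coeff a (2*j)) (monom 1 (2*j)))"
proof (rule poly_eqI)
  fix i
  have ac: "\<forall>j\<ge>r-1. coeff a j = 0" "\<forall>j. odd j \<longrightarrow> coeff a j = 0" using a r by (auto simp: Vplus_iff carrier_iff)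
  have "coeff (\<Sum>j<M. smult (coeff a (2*j)) (monom 1 (2*j))) i = (\<Sum>j<M. coeff a (2*j) * (if 2*j = i then 1 else 0))"
    by (simp add: coeff_sum coeff_monom)
  also have "\<dots> = (\<Sum>j<M. if j = i div 2 then (if even i then coeff a i else 0) else 0)"
    by (intro sum.cong) auto
  also have "\<dots> = coeff a i" using ac N by (auto simp: not_less elim!: evenE)
  finally show "coeff a i = coeff (\<Sum>j<M. smult (coeff a (2*j)) (monom 1 (2*j))) i" by simp
qed

lemma Reals_sum': "(\<And>x. x \<in> A \<Longrightarrow> f x \<in> \<real>) \<Longrightarrow> (\<Sum>x\<in>A. f x) \<in> \<real>"
  by (induction A rule: infinite_finite_induct) auto

lemma of_rat_Reals: "(of_rat q :: complex) \<in> \<real>"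
  by (metis of_real_of_rat_c Reals_of_real)

theorem part2: assumes r: "r \<ge> 3" and od: "odd r"
  shows "\<forall>\<psi>. is_embedding_on r (Vplus r) \<psi> \<longrightarrow> (\<forall>a\<in>Vplus r. \<psi> a \<in> \<real>)"
proof (intro allI impI ballI)
  fix \<psi> a assume e: "is_embedding_on r (Vplus r) \<psi>" and a: "a \<in> Vplus r"
  have r2: "r \<ge> 2" using r by simp
  note E = e[unfolded is_embedding_on_def]
  define M where "M = (r - 1) div 2"
  have N: "r - 1 = 2 * M" using od r by (auto simp: M_def elim!: oddE)
  have M1: "M \<ge> 1" using N r by simp
  have Ej: "monom 1 (2*j) \<in> Vplus r" if "j < M" for j using that N Vplus_E[OF r2] by simp
  have lin: "\<psi> (\<Sum>j<M. smult (c j) (monom 1 (2*j))) = (\<Sum>j<M. of_rat (c j) * \<psi> (monom 1 (2*j)))" for c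
    using lin_sum[of "Vplus r" \<psi> M "\<lambda>j. monom 1 (2*j)" c] E Vplus_0[OF r2] Vplus_add[OF r2] Vplus_smult[OF r2] Ej
    by blast
  have ER: "\<psi> (monom 1 (2*j)) \<in> \<real>" if j: "j < M" for j
  proof (cases "M = 1")
    case True
    then have "j = 0" using j by simp
    then show ?thesis using E r2 by (simp add: Vone_eq)
  next
    case False
    then have M2: "M \<ge> 2" using M1 by simp
    define w where "w = \<psi> (monom 1 2)"
    have mult2: "Vmult r (monom 1 2) (monom 1 (2*j)) = monom 1 (2 * Suc j)" if "Suc j < M" for j
    proof -
      have "monom 1 2 * monom (1::rat) (2*j) = monom 1 (2 * Suc j)" by (simp add: mult_monom)
      moreover have "monom (1::rat) (2 * Suc j) \<in> Vcarrier r" using that N by (intro monom_carrier r2) simp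
      ultimately show ?thesis unfolding Vmult_def using small_mod[OF r2] by simp
    qed
    have pw: "\<psi> (monom 1 (2*j)) = w ^ j" if "j < M" for j
      using that
    proof (induction j)
      case 0 then show ?case using E r2 by (simp add: Vone_eq)
    next
      case (Suc j)
      have "\<psi> (Vmult r (monom 1 2) (monom 1 (2*j))) = \<psi> (monom 1 2) * \<psi> (monom 1 (2*j))"
        using E Ej[of 1] Ej[of j] Suc.prems M2 by simp
      then show ?case using mult2[OF Suc.prems] Suc by (simp add: w_def)
    qed
    define U where "U = (Ucheb (r-1) :: rat poly)"
    define R where "R = monom 1 (r-1) - U"
    have Ud: "degree U = r - 1" "coeff U (r-1) = 1" using Ucheb_deg[of "r-1"] by (auto simp: U_def)
    have Rc: "R \<in> Vcarrier r"
      unfolding carrier_iff[OF r2] R_def using Ud by (auto simp: coeff_monom coeff_eq_0)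
    have Rp: "R \<in> Vplus r"
      unfolding Vplus_iff[OF r2] using Rc N by (auto simp: R_def U_def coeff_monom Ucheb_parity)
    have mm: "monom 1 2 * monom (1::rat) (2*(M-1)) = monom 1 (r-1)"
    proof -
      have "2 + 2*(M-1) = r-1" using N M2 by simp
      then show ?thesis by (simp only: mult_monom mult_1)
    qed
    have "Vmult r (monom 1 2) (monom 1 (2*(M-1))) = monom 1 (r-1) mod U"
      unfolding Vmult_def U_def mm ..
    also have "\<dots> = R mod U" by (simp add: R_def)
    also have "\<dots> = R" using small_mod[OF r2 Rc] by (simp add: U_def)
    finally have VR: "Vmult r (monom 1 2) (monom 1 (2*(M-1))) = R" .
    have e1: "monom 1 2 \<in> Vplus r" "monom 1 (2*(M-1)) \<in> Vplus r" using Ej[of 1] Ej[of "M-1"] M2 by auto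
    have "\<psi> (Vmult r (monom 1 2) (monom 1 (2*(M-1)))) = \<psi> (monom 1 2) * \<psi> (monom 1 (2*(M-1)))"
      using E e1 by blast
    then have "\<psi> R = w * w ^ (M-1)"
      using M2 VR pw[of "M-1"] by (simp add: w_def)
    moreover have "w * w ^ (M-1) = w ^ M" using M2 by (metis Suc_diff_1 less_le_trans power_Suc zero_less_one M1 le_less_trans less_one) 
    ultimately have psiR: "\<psi> R = w ^ M" by simp
    have Rs: "R = (\<Sum>j<M. smult (coeff R (2*j)) (monom 1 (2*j)))" by (rule even_sum[OF r2 N Rp])
    have psiR2: "\<psi> R = (\<Sum>j<M. of_rat (coeff R (2*j)) * w ^ j)"
      by (subst Rs, subst lin) (intro sum.cong refl, simp add: pw)
    define s where "s = csqrt w"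
    have s2: "s^2 = w" by (simp add: s_def)
    have "U = monom 1 (r-1) - R" by (simp add: R_def)
    then have "Veval s U = s ^ (r-1) - (\<Sum>j<M. of_rat (coeff R (2*j)) * s ^ (2*j))"
      by (subst (asm) Rs) (simp add: Veval_diff Veval_monom Veval_sum Veval_smult)
    also have "\<dots> = w ^ M - (\<Sum>j<M. of_rat (coeff R (2*j)) * w ^ j)"
      using N s2 by (simp add: power_mult)
    also have "\<dots> = 0" using psiR psiR2 by simp
    finally have "poly (Ucheb (r-1)) s = 0" by (simp add: U_def Veval_Ucheb)
    then obtain k where k: "k \<in> {1..r-1}" "s = zk r k" using roots_all[OF r2] by blast
    have "w = of_real (- 4 * cos (real k * pi / real r) ^ 2)"
      using s2 k by (simp add: zk_eq power_mult_distrib)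
    then have "w \<in> \<real>" by simp
    then show ?thesis using pw[OF j] by simp
  qed
  have "\<psi> a = (\<Sum>j<M. of_rat (coeff a (2*j)) * \<psi> (monom 1 (2*j)))"
    by (subst even_sum[OF r2 N a], rule lin)
  also have "\<dots> \<in> \<real>" by (intro Reals_sum' Reals_mult of_rat_Reals ER) simp
  finally show "\<psi> a \<in> \<real>" .
qed


theorem mainTheorem10:
  fixes r :: nat
  assumes "r \<ge> 3" and "odd r"
  shows
    "(\<forall>\<phi>. is_embedding_on r (Vcarrier r) \<phi> \<longleftrightarrow>
        (\<exists>k\<in>{1..r - 1}. \<forall>a\<in>Vcarrier r.
            \<phi> a = Veval (2 * \<i> * complex_of_real (cos (real k * pi / real r))) a))
   \<and> (\<forall>\<psi>. is_embedding_on r (Vplus r) \<psi> \<longrightarrow> (\<forall>a\<in>Vplus r. \<psi> a \<in> \<real>))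
   \<and> (\<forall>g::nat.
        Vcounit r (Vpow r (VOmega r) g) = Vtrace r (Vzpow r (VOmega r) (int g - 1))
      \<and> real_of_rat (Vtrace r (Vzpow r (VOmega r) (int g - 1)))
          = (real r / 2) powi (int g - 1) *
            (\<Sum>k=1..r - 1. sin (real k * pi / real r) powi (2 - 2 * int g)))
   \<and> (\<forall>k\<in>{1..r - 1}. let t = exp (\<i> * of_real (real k * pi / real r)) in
        Veval (\<i> * (t + inverse t)) (VOmega r) = - 2 * of_nat r / (t - inverse t)^2)"
  proof -
  have r2: "r \<ge> 2" using assms(1) by simp
  show ?thesis using part1[OF assms(1)] part2[OF assms] part3[OF r2] part4[OF r2] by blast
qed

end
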